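(* Let $T:X\rightrightarrows X^*$ be a multivalued operator. If $S(T,K)=S(T^\rho,K)$ for all $K\subset X$, or $M(T,K)=M(T^\rho,K)$ for all $K\subset X$, then $T$ is pre-maximal pseudomonotone.
   Context: $X$ is a real Banach space with dual $X^*$ and pairing $\langle x,x^*\rangle=x^*(x)$. A multivalued operator $T:X\rightrightarrows X^*$ is identified with its graph $T\subset X\times X^*$; $T(x)=\{x^*:(x,x^* )\in T\}$. For $K\subset X$: $S(T,K)=\{x\in K: \exists x^*\in T(x),\ \langle y-x,x^*\rangle\ge0\ \forall y\in K\}$ and $M(T,K)=\{x\in K: \langle x-y,y^*\rangle\le0\ \forall (y,y^* )\in T \text{ with } y\in K\}$. For $(x,x^* ),(y,y^* )\in X\times X^*$, write $(x,x^* )\sim_p(y,y^* )$ if either $\min\{\langle x-y,y^*\rangle,\langle y-x,x^*\rangle\}<0$ or $\langle x-y,y^*\rangle=\langle y-x,x^*\rangle=0$. The pseudomonotone polar is $T^\rho=\{(x,x^* ): (x,x^* )\sim_p(y,y^* )\ \forall (y,y^* )\in T\}$. $T$ is pseudomonotone if for all $(x,x^* ),(y,y^* )\in T$, $\langle y-x,x^*\rangle\ge0$ implies $\langle y-x,y^*\rangle\ge0$; $T$ is pre-maximal pseudomonotone if both $T$ and $T^\rho$ are pseudomonotone. *)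

theory Defs
  imports "HOL-Analysis.Analysis"
begin

text \<open>X is a real Banach space ('a::banach), X* is the space of continuous linear
functionals (type blinfun); the pairing is blinfun application.
A multivalued operator is identified with its graph.\<close>

type_synonym 'a mop = "('a \<times> ('a \<Rightarrow>\<^sub>L real)) set"

definition pair :: "'a::banach \<Rightarrow> ('a \<Rightarrow>\<^sub>L real) \<Rightarrow> real" where
  "pair x xs = blinfun_apply xs x"

definition SolStampacchia :: "'a::banach mop \<Rightarrow> 'a set \<Rightarrow> 'a set" where
  "SolStampacchia T K = {x \<in> K. \<exists>xs. (x, xs) \<in> T \<and> (\<forall>y\<in>K. pair (y - x) xs \<ge> 0)}"

definition SolMinty :: "'a::banach mop \<Rightarrow> 'a set \<Rightarrow> 'a set" where
  "SolMinty T K = {x \<in> K. \<forall>y ys. (y, ys) \<in> T \<and> y \<in> K \<longrightarrow> pair (x - y) ys \<le> 0}"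

definition psim :: "'a::banach \<times> ('a \<Rightarrow>\<^sub>L real) \<Rightarrow> 'a \<times> ('a \<Rightarrow>\<^sub>L real) \<Rightarrow> bool" where
  "psim p q = (case p of (x, xs) \<Rightarrow> case q of (y, ys) \<Rightarrow>
      min (pair (x - y) ys) (pair (y - x) xs) < 0 \<or>
      (pair (x - y) ys = 0 \<and> pair (y - x) xs = 0))"

definition pm_polar :: "'a::banach mop \<Rightarrow> 'a mop" where
  "pm_polar T = {p. \<forall>q\<in>T. psim p q}"

definition pseudomonotone :: "'a::banach mop \<Rightarrow> bool" where
  "pseudomonotone T = (\<forall>x xs y ys. (x, xs) \<in> T \<and> (y, ys) \<in> T \<longrightarrow>
      pair (y - x) xs \<ge> 0 \<longrightarrow> pair (y - x) ys \<ge> 0)"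

definition pre_maximal_pseudomonotone :: "'a::banach mop \<Rightarrow> bool" where
  "pre_maximal_pseudomonotone T = (pseudomonotone T \<and> pseudomonotone (pm_polar T))"

end

theory Submission
  imports Defs
begin

lemma pair_swap: "pair (x - y) a = - pair (y - x) a"
  by (simp add: pair_def blinfun.diff_right)

lemma pair_self: "pair (x - x) a = 0"
  by (simp add: pair_def)

lemma pair_zero[simp]: "pair 0 a = 0"
  by (simp add: pair_def)

lemma psimD: "psim (x, xs) (y, ys) \<Longrightarrow> pair (y - x) xs \<ge> 0 \<Longrightarrow> pair (x - y) ys \<le> 0"
  unfolding psim_def by (auto simp: min_def split: if_splits)

lemma psimD2: "psim (x, xs) (y, ys) \<Longrightarrow> pair (x - y) ys \<ge> 0 \<Longrightarrow> pair (y - x) xs \<le> 0"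
  unfolding psim_def by (auto simp: min_def split: if_splits)

lemma S_T:
  assumes H: "\<forall>K. SolStampacchia T K = SolStampacchia (pm_polar T) K"
  shows "pseudomonotone T"
  unfolding pseudomonotone_def
proof (intro allI impI, rule ccontr)
  fix x xs y ys assume A: "(x, xs) \<in> T \<and> (y, ys) \<in> T" and B: "pair (y - x) xs \<ge> 0"
    and C: "\<not> pair (y - x) ys \<ge> 0"
  have "x \<in> SolStampacchia T {x, y}" using A B by (auto simp: SolStampacchia_def pair_self)
  then have "x \<in> SolStampacchia (pm_polar T) {x, y}" using H by simp
  then obtain xp where "(x, xp) \<in> pm_polar T" "pair (y - x) xp \<ge> 0"
    by (auto simp: SolStampacchia_def)
  then have "psim (x, xp) (y, ys)" using A by (auto simp: pm_polar_def)
  then have "pair (x - y) ys \<le> 0" using \<open>pair (y - x) xp \<ge> 0\<close> by (rule psimD)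
  with C show False using pair_swap[of x y ys] by linarith
qed

lemma S_P:
  assumes H: "\<forall>K. SolStampacchia T K = SolStampacchia (pm_polar T) K"
  shows "pseudomonotone (pm_polar T)"
  unfolding pseudomonotone_def
proof (intro allI impI, rule ccontr)
  fix x xs y ys assume A: "(x, xs) \<in> pm_polar T \<and> (y, ys) \<in> pm_polar T" and B: "pair (y - x) xs \<ge> 0"
    and C: "\<not> pair (y - x) ys \<ge> 0"
  have "x \<in> SolStampacchia (pm_polar T) {x, y}" using A B by (auto simp: SolStampacchia_def pair_self)
  then have "x \<in> SolStampacchia T {x, y}" using H by simp
  then obtain a where "(x, a) \<in> T" "pair (y - x) a \<ge> 0"
    by (auto simp: SolStampacchia_def)
  then have "psim (y, ys) (x, a)" using A by (auto simp: pm_polar_def)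
  from psimD2[OF this] \<open>pair (y - x) a \<ge> 0\<close> have "pair (x - y) ys \<le> 0" by simp
  with C show False using pair_swap[of x y ys] by linarith
qed

lemma M_T:
  assumes H: "\<forall>K. SolMinty T K = SolMinty (pm_polar T) K"
  shows "pseudomonotone T"
  unfolding pseudomonotone_def
proof (intro allI impI, rule ccontr)
  fix x xs y ys assume A: "(x, xs) \<in> T \<and> (y, ys) \<in> T" and B: "pair (y - x) xs \<ge> 0"
    and C: "\<not> pair (y - x) ys \<ge> 0"
  have "x \<in> SolMinty (pm_polar T) {x, y}"
    unfolding SolMinty_def
  proof (intro CollectI conjI allI impI)
    show "x \<in> {x, y}" by simp
    fix z zs assume Z: "(z, zs) \<in> pm_polar T \<and> z \<in> {x, y}"
    show "pair (x - z) zs \<le> 0"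
    proof (cases "z = x")
      case True thus ?thesis by (simp add: pair_self)
    next
      case False
      with Z have "(y, zs) \<in> pm_polar T" "z = y" by auto
    then have "psim (y, zs) (x, xs)" using A by (auto simp: pm_polar_def)
    from psimD2[OF this] B \<open>z = y\<close> show ?thesis by simp
    qed
  qed
  then have "x \<in> SolMinty T {x, y}" using H by simp
  then have "pair (x - y) ys \<le> 0" using A by (auto simp: SolMinty_def)
  with C show False using pair_swap[of x y ys] by linarith
qed

lemma M_P:
  assumes H: "\<forall>K. SolMinty T K = SolMinty (pm_polar T) K"
  shows "pseudomonotone (pm_polar T)"
  unfolding pseudomonotone_def
proof (intro allI impI, rule ccontr)
  fix x xs y ys assume A: "(x, xs) \<in> pm_polar T \<and> (y, ys) \<in> pm_polar T" and B: "pair (y - x) xs \<ge> 0"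
    and C: "\<not> pair (y - x) ys \<ge> 0"
  have "x \<in> SolMinty T {x, y}"
    unfolding SolMinty_def
  proof (intro CollectI conjI allI impI)
    show "x \<in> {x, y}" by simp
    fix z zs assume Z: "(z, zs) \<in> T \<and> z \<in> {x, y}"
    show "pair (x - z) zs \<le> 0"
    proof (cases "z = x")
      case True thus ?thesis by (simp add: pair_self)
    next
      case False
      with Z have "(y, zs) \<in> T" "z = y" by auto
    then have "psim (x, xs) (y, zs)" using A by (auto simp: pm_polar_def)
    from psimD[OF this] B \<open>z = y\<close> show ?thesis by simp
    qed
  qed
  then have "x \<in> SolMinty (pm_polar T) {x, y}" using H by simp
  then have "pair (x - y) ys \<le> 0" using A by (auto simp: SolMinty_def)
  with C show False using pair_swap[of x y ys] by linarith
qed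

theorem mainTheorem19:
  fixes T :: "'a::banach mop"
  assumes "(\<forall>K. SolStampacchia T K = SolStampacchia (pm_polar T) K)
         \<or> (\<forall>K. SolMinty T K = SolMinty (pm_polar T) K)"
  shows "pre_maximal_pseudomonotone T"
  using assms S_T S_P M_T M_P unfolding pre_maximal_pseudomonotone_def by blast

end
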